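(* Let $r\geq 1$ be an integer and $N\geq 1$. Then $$ \sum_{a\leq N^r}(\tau_r'(a))^2\leq\left(\sum_{a\leq N}\tau_r(a)\right)^r. $$
   Context: $a$ runs over positive integers. $\tau_r(a)$ is the number of ways to write $a$ as an ordered product of $r$ positive integers, and $\tau_r'(a)$ is the number of ways to write $a$ as an ordered product of $r$ positive integers each of which does not exceed $N$. *)

theory Defs
  imports "HOL-Analysis.Analysis" "HOL-Library.FuncSet"
begin

definition tau :: "nat \<Rightarrow> nat \<Rightarrow> nat" where
  "tau r a = card {f \<in> {..<r} \<rightarrow>\<^sub>E {1..a}. (\<Prod>i<r. f i) = a}"

definition tau' :: "nat \<Rightarrow> nat \<Rightarrow> nat \<Rightarrow> nat" where
  "tau' N r a = card {f \<in> {..<r} \<rightarrow>\<^sub>E {1..min a N}. (\<Prod>i<r. f i) = a}"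

end

theory Submission
  imports Defs
begin

lemma split_prod:
  fixes y :: "nat \<Rightarrow> nat"
  shows "c dvd (\<Prod>j<n. y j) \<Longrightarrow> \<exists>w. (\<forall>j<n. w j dvd y j) \<and> (\<Prod>j<n. w j) = c"
proof (induction n arbitrary: c)
  case 0
  then show ?case by auto
next
  case (Suc n)
  then have "c dvd (\<Prod>j<n. y j) * y n" by simp
  then obtain b c' where bc: "c = b * c'" "b dvd (\<Prod>j<n. y j)" "c' dvd y n"
    using division_decomp by blast
  obtain w where w: "\<forall>j<n. w j dvd y j" "(\<Prod>j<n. w j) = b" using Suc.IH[OF bc(2)] by blast
  have "(\<Prod>j<n. (w(n:=c')) j) = b" using w(2) by (auto intro!: prod.cong)
  then have "(\<Prod>j<Suc n. (w(n:=c')) j) = c" using bc(1) by simp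
  moreover have "\<forall>j<Suc n. (w(n:=c')) j dvd y j" using w(1) bc(3) by (auto simp: less_Suc_eq)
  ultimately show ?case by blast
qed

lemma matrix_exists:
  fixes x y :: "nat \<Rightarrow> nat"
  shows "(\<forall>j<n. y j > 0) \<Longrightarrow> (\<Prod>i<m. x i) = (\<Prod>j<n. y j) \<Longrightarrow>
    \<exists>z. (\<forall>i<m. (\<Prod>j<n. z i j) = x i) \<and> (\<forall>j<n. (\<Prod>i<m. z i j) = y j)"
proof (induction m arbitrary: y)
  case 0
  then have "(\<Prod>j<n. y j) = 1" by simp
  then have "\<forall>j<n. y j = 1" by (subst (asm) prod_eq_1_iff) auto
  then show ?case by (intro exI[of _ "\<lambda>_ _. 1"]) auto
next
  case (Suc m)
  have pos: "(\<Prod>j<n. y j) > 0" using Suc.prems(1) by (simp add: prod_pos)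
  have eq: "(\<Prod>i<m. x i) * x m = (\<Prod>j<n. y j)" using Suc.prems(2) by simp
  then have xm: "x m > 0" using pos by (metis gr0I mult_0_right)
  have "x m dvd (\<Prod>j<n. y j)" using eq by (metis dvd_triv_right)
  then obtain w where w: "\<forall>j<n. w j dvd y j" "(\<Prod>j<n. w j) = x m" using split_prod by blast
  define u where "u j = y j div w j" for j
  have uw: "\<forall>j<n. u j * w j = y j" using w(1) by (simp add: u_def)
  have upos: "\<forall>j<n. u j > 0" using uw Suc.prems(1) by (metis gr0I mult_0)
  have "(\<Prod>j<n. u j) * x m = (\<Prod>j<n. u j * w j)"
    using w(2) by (simp add: prod.distrib)
  also have "\<dots> = (\<Prod>j<n. y j)" using uw by (intro prod.cong) auto
  finally have "(\<Prod>j<n. u j) * x m = (\<Prod>j<n. y j)" .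
  then have "(\<Prod>j<n. u j) = (\<Prod>i<m. x i)" using eq xm by (metis mult_right_cancel not_gr0)
  then obtain z where z: "\<forall>i<m. (\<Prod>j<n. z i j) = x i" "\<forall>j<n. (\<Prod>i<m. z i j) = u j"
    using Suc.IH[OF upos] by metis
  define z' where "z' i j = (if i = m then w j else z i j)" for i j
  have "\<forall>i<Suc m. (\<Prod>j<n. z' i j) = x i"
    using z(1) w(2) by (auto simp: z'_def less_Suc_eq)
  moreover have "\<forall>j<n. (\<Prod>i<Suc m. z' i j) = y j"
  proof (intro allI impI)
    fix j assume j: "j < n"
    have "(\<Prod>i<m. z' i j) = (\<Prod>i<m. z i j)" by (auto simp: z'_def intro!: prod.cong)
    then show "(\<Prod>i<Suc m. z' i j) = y j" using z(2) uw j by (simp add: z'_def)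
  qed
  ultimately show ?case by blast
qed

lemma factor_le_prod:
  fixes f :: "nat \<Rightarrow> nat"
  assumes "finite I" "\<forall>i\<in>I. f i \<ge> 1" "k \<in> I"
  shows "f k \<le> (\<Prod>i\<in>I. f i)"
proof -
  have "f k dvd (\<Prod>i\<in>I. f i)" using assms by (simp add: dvd_prodI)
  moreover have "(\<Prod>i\<in>I. f i) > 0" using assms by (intro prod_pos) auto
  ultimately show ?thesis by (simp add: dvd_imp_le)
qed

theorem lemma2p2:
  fixes r N :: nat
  assumes "r \<ge> 1" and "N \<ge> 1"
  shows "(\<Sum>a\<in>{1..N^r}. (tau' N r a)^2) \<le> (\<Sum>a\<in>{1..N}. tau r a)^r"
proof -
  define S where "S = {..<r} \<rightarrow>\<^sub>E {1..N::nat}"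
  have finS: "finite S" by (simp add: S_def finite_PiE)
  define A where "A a = {f \<in> S. (\<Prod>i<r. f i) = a}" for a
  have tau'A: "tau' N r a = card (A a)" if "a \<in> {1..N^r}" for a
  proof -
    have "{f \<in> {..<r} \<rightarrow>\<^sub>E {1..min a N}. (\<Prod>i<r. f i) = a} = A a"
    proof (rule set_eqI, rule iffI)
      fix f assume "f \<in> {f \<in> {..<r} \<rightarrow>\<^sub>E {1..min a N}. (\<Prod>i<r. f i) = a}"
      then show "f \<in> A a" by (auto simp: A_def S_def PiE_iff)
    next
      fix f assume f: "f \<in> A a"
      then have "\<forall>i\<in>{..<r}. f i \<ge> 1" "\<forall>i\<in>{..<r}. f i \<le> N" by (auto simp: A_def S_def PiE_iff)
      then have "\<forall>i\<in>{..<r}. f i \<le> a" using f factor_le_prod[of "{..<r}" f]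
        by (auto simp: A_def)
      then show "f \<in> {f \<in> {..<r} \<rightarrow>\<^sub>E {1..min a N}. (\<Prod>i<r. f i) = a}"
        using f \<open>\<forall>i\<in>{..<r}. f i \<le> N\<close> \<open>\<forall>i\<in>{..<r}. f i \<ge> 1\<close>
        by (auto simp: A_def S_def PiE_iff)
    qed
    then show ?thesis by (simp add: tau'_def)
  qed
  define P where "P = {(f,g). f \<in> S \<and> g \<in> S \<and> (\<Prod>i<r. f i) = (\<Prod>i<r. g i)}"
  have prod_range: "(\<Prod>i<r. f i) \<in> {1..N^r}" if "f \<in> S" for f
  proof -
    have "(\<Prod>i<r. f i) \<le> (\<Prod>i<r. N)" using that
      by (intro prod_mono) (auto simp: S_def PiE_iff)
    moreover have "(\<Prod>i<r. f i) \<ge> 1" using that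
      by (metis (no_types, lifting) PiE_E S_def atLeastAtMost_iff less_one not_le prod_pos zero_less_iff_neq_zero)
    ultimately show ?thesis by simp
  qed
  have "P = (\<Union>a\<in>{1..N^r}. A a \<times> A a)"
    using prod_range by (auto simp: P_def A_def)
  then have "card P = (\<Sum>a\<in>{1..N^r}. card (A a \<times> A a))"
    using finS by (simp add: card_UN_disjoint A_def, subst card_UN_disjoint) auto
  also have "\<dots> = (\<Sum>a\<in>{1..N^r}. (tau' N r a)^2)"
    by (intro sum.cong) (auto simp: tau'A card_cartesian_product power2_eq_square)
  finally have LHS: "(\<Sum>a\<in>{1..N^r}. (tau' N r a)^2) = card P" by simp
  define T where "T = {f \<in> {..<r} \<rightarrow>\<^sub>E {1..N::nat}. (\<Prod>i<r. f i) \<le> N}"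
  define B where "B a = {f \<in> {..<r} \<rightarrow>\<^sub>E {1..a::nat}. (\<Prod>i<r. f i) = a}" for a
  have finB: "finite (B a)" for a :: nat unfolding B_def by (rule finite_subset[of _ "{..<r} \<rightarrow>\<^sub>E {1..a}"]) (auto intro!: finite_PiE)
  have "T = (\<Union>a\<in>{1..N}. B a)"
  proof (rule set_eqI, rule iffI)
    fix f assume f: "f \<in> T"
    then have "(\<Prod>i<r. f i) \<ge> 1" 
      by (metis (no_types, lifting) PiE_E T_def atLeastAtMost_iff mem_Collect_eq less_one not_le prod_pos zero_less_iff_neq_zero)
    moreover have "\<forall>i\<in>{..<r}. f i \<le> (\<Prod>i<r. f i)"
      using f factor_le_prod[of "{..<r}" f] by (auto simp: T_def PiE_iff)
    ultimately show "f \<in> (\<Union>a\<in>{1..N}. B a)" using f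
      by (auto simp: T_def B_def PiE_iff)
  next
    fix f assume "f \<in> (\<Union>a\<in>{1..N}. B a)"
    then obtain a where a: "a \<in> {1..N}" "f \<in> B a" by blast
    then have "\<forall>i<r. f i \<le> a" "f \<in> {..<r} \<rightarrow>\<^sub>E {1..a}" "(\<Prod>i<r. f i) = a"
      by (auto simp: B_def PiE_iff)
    then show "f \<in> T" using a(1) by (fastforce simp: T_def PiE_iff)
  qed
  then have cardT: "card T = (\<Sum>a\<in>{1..N}. tau r a)"
    using finB by (simp add: card_UN_disjoint B_def tau_def, subst card_UN_disjoint) (auto simp: B_def)
  have finT: "finite T" by (simp add: T_def finite_PiE)
  have "card ({..<r} \<rightarrow>\<^sub>E T) = card T ^ r" by (simp add: card_PiE)
  have zex: "\<exists>z. (\<forall>i<r. (\<Prod>j<r. z i j) = f i) \<and> (\<forall>j<r. (\<Prod>i<r. z i j) = g j)"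
    if "(f,g) \<in> P" for f g
  proof -
    have "g \<in> S" "(\<Prod>i<r. f i) = (\<Prod>j<r. g j)" using that by (auto simp: P_def)
    then have "\<forall>j<r. 0 < g j" "(\<Prod>i<r. f i) = (\<Prod>j<r. g j)"
      unfolding S_def by (metis PiE_mem atLeastAtMost_iff lessThan_iff less_le_trans zero_less_one, simp)
    then show ?thesis using matrix_exists[where n=r and m=r and x=f and y=g] by blast
  qed
  define Z where "Z fg = (SOME z. (\<forall>i<r. (\<Prod>j<r. z i j) = fst fg i) \<and> (\<forall>j<r. (\<Prod>i<r. z i j) = snd fg j))" for fg :: "(nat \<Rightarrow> nat) \<times> (nat \<Rightarrow> nat)"
  have Zp: "(\<forall>i<r. (\<Prod>j<r. Z fg i j) = fst fg i) \<and> (\<forall>j<r. (\<Prod>i<r. Z fg i j) = snd fg j)"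
    if "fg \<in> P" for fg
  proof -
    have "fg = (fst fg, snd fg)" by simp
    then have "\<exists>z. (\<forall>i<r. (\<Prod>j<r. z i j) = fst fg i) \<and> (\<forall>j<r. (\<Prod>i<r. z i j) = snd fg j)"
      using zex[of "fst fg" "snd fg"] that by metis
    then show ?thesis unfolding Z_def by (rule someI_ex)
  qed
  define F where "F fg = (\<lambda>i\<in>{..<r}. \<lambda>j\<in>{..<r}. Z fg i j)" for fg
  have extS: "f i = undefined" if "f \<in> S" "\<not> i < r" for f i
    using that unfolding S_def by (metis PiE_arb lessThan_iff)
  have PS: "fst p \<in> S" "snd p \<in> S" if "p \<in> P" for p
  proof -
    obtain f g where "p = (f,g)" by (cases p)
    then show "fst p \<in> S" "snd p \<in> S" using that unfolding P_def by simp_all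
  qed
  have inj: "inj_on F P"
  proof (rule inj_onI)
    fix p q assume p: "p \<in> P" and q: "q \<in> P" and e: "F p = F q"
    have ez: "Z p i j = Z q i j" if "i < r" "j < r" for i j
    proof -
      have "F p i j = F q i j" using e by simp
      then show ?thesis using that by (simp add: F_def)
    qed
    have 1: "fst p i = fst q i" for i
    proof (cases "i < r")
      case True
      have "fst p i = (\<Prod>j<r. Z p i j)" using Zp[OF p] True by simp
      also have "\<dots> = (\<Prod>j<r. Z q i j)" using ez True by (intro prod.cong) auto
      also have "\<dots> = fst q i" using Zp[OF q] True by simp
      finally show ?thesis .
    next
      case False
      then show ?thesis using extS[OF PS(1)[OF p]] extS[OF PS(1)[OF q]] by simp
    qed
    have 2: "snd p j = snd q j" for j
    proof (cases "j < r")
      case True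
      have "snd p j = (\<Prod>i<r. Z p i j)" using Zp[OF p] True by simp
      also have "\<dots> = (\<Prod>i<r. Z q i j)" using ez True by (intro prod.cong) auto
      also have "\<dots> = snd q j" using Zp[OF q] True by simp
      finally show ?thesis .
    next
      case False
      then show ?thesis using extS[OF PS(2)[OF p]] extS[OF PS(2)[OF q]] by simp
    qed
    have "fst p = fst q" using 1 by (rule ext)
    moreover have "snd p = snd q" using 2 by (rule ext)
    ultimately show "p = q" by (simp add: prod_eq_iff)
  qed
  have img: "F ` P \<subseteq> {..<r} \<rightarrow>\<^sub>E T"
  proof
    fix h assume "h \<in> F ` P"
    then obtain p where p: "p \<in> P" and h: "h = F p" by blast
    have fS: "fst p \<in> S" using PS[OF p] by simp
    have row: "F p i \<in> T" if i: "i < r" for i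
    proof -
      have rp: "(\<Prod>j<r. Z p i j) = fst p i" using Zp[OF p] i by simp
      have fi: "fst p i \<in> {1..N}" using fS i unfolding S_def by (metis PiE_mem lessThan_iff)
      have pos: "\<forall>j\<in>{..<r}. Z p i j \<ge> 1"
      proof
        fix j assume j: "j \<in> {..<r}"
        have "(\<Prod>j<r. Z p i j) \<noteq> 0" using rp fi by simp
        then have "Z p i j \<noteq> 0" using j by (simp add: prod_zero_iff)
        then show "Z p i j \<ge> 1" by simp
      qed
      have le: "\<forall>j\<in>{..<r}. Z p i j \<le> N"
      proof
        fix j assume j: "j \<in> {..<r}"
        have "Z p i j \<le> (\<Prod>j<r. Z p i j)" by (rule factor_le_prod[OF _ pos j]) simp
        then show "Z p i j \<le> N" using rp fi by simp
      qed
      have "F p i = (\<lambda>j\<in>{..<r}. Z p i j)" using i by (simp add: F_def)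
      moreover have "(\<lambda>j\<in>{..<r}. Z p i j) \<in> {..<r} \<rightarrow>\<^sub>E {1..N}" using pos le by auto
      moreover have "(\<Prod>j<r. (\<lambda>j\<in>{..<r}. Z p i j) j) \<le> N" using rp fi by simp
      ultimately show ?thesis unfolding T_def by simp
    qed
    have "F p \<in> extensional {..<r}" by (simp add: F_def)
    then show "h \<in> {..<r} \<rightarrow>\<^sub>E T" using row h by (auto simp: PiE_iff)
  qed
  have "card P \<le> card ({..<r} \<rightarrow>\<^sub>E T)"
    using card_inj_on_le[OF inj img] finT by (simp add: finite_PiE)
  also have "\<dots> = card T ^ r" by (simp add: card_PiE)
  finally show ?thesis using LHS cardT by simp
qed

end
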